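(* Let $n\ge 2$ and let $S=\{A_1,\dots,A_m\}$ be a finite set of real $n\times n$ matrices such that every $A\in S$ satisfies $A\mathbf{1}=\mathbf{1}$ and $\|Ax\|_{\mathcal{P}}\le\|x\|_{\mathcal{P}}$ for all $x\in\mathbb{R}^n$. Consider the switched system $x(t+1)=A_{\sigma(t)}x(t)$, $x(0)=x_0$, with $\sigma:\mathbb{N}\to\{1,\dots,m\}$. Then there exists a sequence $\sigma$ such that for every initial condition $x_0$ the trajectory converges to a multiple of $\mathbf{1}$ if and only if for every $x_0\in\mathcal{P}$ there exists $\sigma$ with $A_{\sigma(N-1)}\cdots A_{\sigma(0)}x_0\in\operatorname{int}(\mathcal{P})$, where $N=\tfrac12(3^n-2^{n+1}+1)$.
   Context: $\mathbf{1}=(1,\dots,1)^\top\in\mathbb{R}^n$. The seminorm is $\|x\|_{\mathcal{P}}=\tfrac12(\max_i x_i-\min_i x_i)$ and $\mathcal{P}=\{x:\|x\|_{\mathcal{P}}\le 1\}$. ($N$ equals the number of pairs $\{F,-F\}$ of opposite proper open faces of the polyhedron $\mathcal{P}$.) *)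

theory Defs
  imports "HOL-Analysis.Analysis"
begin

definition ones :: "real^'n" where
  "ones = (\<chi> i. 1)"

definition pnorm :: "real^'n \<Rightarrow> real" where
  "pnorm x = (Max (range (\<lambda>i. x $ i)) - Min (range (\<lambda>i. x $ i))) / 2"

definition Pball :: "(real^'n) set" where
  "Pball = {x. pnorm x \<le> 1}"

text \<open>Trajectory of the switched system x(t+1) = A_sigma(t) x(t), x(0) = x0;
  the switching signal is given directly as the sequence of chosen matrices.\<close>
fun traj :: "(nat \<Rightarrow> real^'n^'n) \<Rightarrow> real^'n \<Rightarrow> nat \<Rightarrow> real^'n" where
  "traj \<sigma> x0 0 = x0"
| "traj \<sigma> x0 (Suc t) = \<sigma> t *v traj \<sigma> x0 t"

text \<open>N = (3^n - 2^(n+1) + 1)/2 (an integer for every n).\<close>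
definition Nbound :: "nat \<Rightarrow> nat" where
  "Nbound n = (3 ^ n + 1 - 2 ^ (n + 1)) div 2"

end

theory Submission
  imports Defs
begin

definition mx :: "real^'n \<Rightarrow> real" where "mx x = Max (range (\<lambda>i. x $ i))"
definition mn :: "real^'n \<Rightarrow> real" where "mn x = Min (range (\<lambda>i. x $ i))"

lemma pnorm_mx: "pnorm x = (mx x - mn x) / 2"
  by (simp add: pnorm_def mx_def mn_def)

lemma mx_ge: "x $ i \<le> mx x"
  unfolding mx_def by (rule Max_ge) auto
lemma mn_le: "mn x \<le> x $ i"
  unfolding mn_def by (rule Min_le) auto
lemma mx_ex: "\<exists>i. x $ i = mx x"
proof -
  have "mx x \<in> range (\<lambda>i. x $ i)" unfolding mx_def by (rule Max_in) auto
  thus ?thesis by auto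
qed
lemma mn_ex: "\<exists>i. x $ i = mn x"
proof -
  have "mn x \<in> range (\<lambda>i. x $ i)" unfolding mn_def by (rule Min_in) auto
  thus ?thesis by auto
qed
lemma mx_le_iff: "mx x \<le> c \<longleftrightarrow> (\<forall>i. x $ i \<le> c)"
  using mx_ge mx_ex by (metis order_trans)
lemma mn_ge_iff: "c \<le> mn x \<longleftrightarrow> (\<forall>i. c \<le> x $ i)"
  using mn_le mn_ex by (metis order_trans)
lemma mx_eqI: "(\<And>i. x $ i \<le> c) \<Longrightarrow> x $ j = c \<Longrightarrow> mx x = c"
  by (metis antisym mx_ge mx_le_iff)
lemma mn_eqI: "(\<And>i. c \<le> x $ i) \<Longrightarrow> x $ j = c \<Longrightarrow> mn x = c"
  by (metis antisym mn_le mn_ge_iff)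

lemma pnorm_nonneg: "0 \<le> pnorm x"
proof -
  have "mn x \<le> mx x" by (rule order_trans[OF mn_le mx_ge])
  thus ?thesis unfolding pnorm_mx by simp
qed

lemma mx_add: "mx (x + y) \<le> mx x + mx y"
  unfolding mx_le_iff by (simp add: add_mono mx_ge)
lemma mn_add: "mn x + mn y \<le> mn (x + y)"
  unfolding mn_ge_iff by (simp add: add_mono mn_le)

lemma pnorm_add: "pnorm (x + y) \<le> pnorm x + pnorm y"
proof -
  have "(mx (x + y) - mn (x + y))/2 \<le> ((mx x - mn x) + (mx y - mn y))/2"
    using mx_add[of x y] mn_add[of x y] by (intro divide_right_mono) linarith+
  thus ?thesis unfolding pnorm_mx by (simp add: add_divide_distrib)
qed

lemma mx_scale_pos: assumes "c \<ge> 0" shows "mx (c *\<^sub>R x) = c * mx x"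
proof -
  obtain j where j: "x $ j = mx x" using mx_ex by metis
  show ?thesis
  proof (rule mx_eqI[where j=j])
    fix i show "(c *\<^sub>R x) $ i \<le> c * mx x" using mult_left_mono[OF mx_ge assms] by simp
  next
    show "(c *\<^sub>R x) $ j = c * mx x" using j by simp
  qed
qed
lemma mn_scale_pos: assumes "c \<ge> 0" shows "mn (c *\<^sub>R x) = c * mn x"
proof -
  obtain j where j: "x $ j = mn x" using mn_ex by metis
  show ?thesis
  proof (rule mn_eqI[where j=j])
    fix i show "c * mn x \<le> (c *\<^sub>R x) $ i" using mult_left_mono[OF mn_le assms] by simp
  next
    show "(c *\<^sub>R x) $ j = c * mn x" using j by simp
  qed
qed
lemma mx_neg: "mx (- x) = - mn x"
proof -
  obtain j where j: "x $ j = mn x" using mn_ex by metis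
  show ?thesis
  proof (rule mx_eqI[where j=j])
    fix i show "(- x) $ i \<le> - mn x" using mn_le[of x i] by simp
  next
    show "(- x) $ j = - mn x" using j by simp
  qed
qed
lemma mn_neg: "mn (- x) = - mx x"
proof -
  obtain j where j: "x $ j = mx x" using mx_ex by metis
  show ?thesis
  proof (rule mn_eqI[where j=j])
    fix i show "- mx x \<le> (- x) $ i" using mx_ge[of x i] by simp
  next
    show "(- x) $ j = - mx x" using j by simp
  qed
qed

lemma pnorm_neg: "pnorm (- x) = pnorm x"
  unfolding pnorm_mx mx_neg mn_neg by simp

lemma pnorm_scale: "pnorm (c *\<^sub>R x) = \<bar>c\<bar> * pnorm x"
proof (cases "c \<ge> 0")
  case True thus ?thesis unfolding pnorm_mx by (simp add: mx_scale_pos mn_scale_pos right_diff_distrib)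
next
  case False
  have "c *\<^sub>R x = (- c) *\<^sub>R (- x)" by simp
  hence "pnorm (c *\<^sub>R x) = (-c) * pnorm (-x)" using False
    unfolding pnorm_mx by (simp only: mx_scale_pos mn_scale_pos) (simp add: right_diff_distrib)
  thus ?thesis using False pnorm_neg by simp
qed

lemma pnorm_diff: "pnorm (x - y) \<le> pnorm x + pnorm y"
  using pnorm_add[of x "-y"] pnorm_neg[of y] by simp

lemma pnorm_le_norm: "pnorm x \<le> norm x"
proof -
  obtain i j where i: "x $ i = mx x" and j: "x $ j = mn x" using mx_ex mn_ex by metis
  have a: "x $ i \<le> norm x" by (rule abs_le_D1[OF component_le_norm_cart])
  have b: "- (x $ j) \<le> norm x" by (rule abs_le_D2[OF component_le_norm_cart])
  have "mx x \<le> norm x" "- mn x \<le> norm x" using a b i j by simp_all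
  hence "(mx x - mn x)/2 \<le> (norm x + norm x)/2" by (intro divide_right_mono) linarith+
  thus ?thesis unfolding pnorm_mx by simp
qed

lemma ones_comp[simp]: "ones $ i = 1" by (simp add: ones_def)

lemma mx_shift: "mx (x + c *\<^sub>R ones) = mx x + c"
proof -
  obtain j where j: "x $ j = mx x" using mx_ex by metis
  show ?thesis
  proof (rule mx_eqI[where j=j])
    fix i show "(x + c *\<^sub>R ones) $ i \<le> mx x + c" using mx_ge[of x i] by simp
  next
    show "(x + c *\<^sub>R ones) $ j = mx x + c" using j by simp
  qed
qed
lemma mn_shift: "mn (x + c *\<^sub>R ones) = mn x + c"
proof -
  obtain j where j: "x $ j = mn x" using mn_ex by metis
  show ?thesis
  proof (rule mn_eqI[where j=j])
    fix i show "mn x + c \<le> (x + c *\<^sub>R ones) $ i" using mn_le[of x i] by simp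
  next
    show "(x + c *\<^sub>R ones) $ j = mn x + c" using j by simp
  qed
qed
lemma pnorm_shift: "pnorm (x + c *\<^sub>R ones) = pnorm x"
  unfolding pnorm_mx mx_shift mn_shift by simp

lemma pnorm_zero: "pnorm (0::real^'n) = 0"
  using pnorm_scale[of 0 "0::real^'n"] by simp

lemma pnorm_zero_iff: fixes x :: "real^'n" shows "pnorm x = 0 \<longleftrightarrow> x = mn x *\<^sub>R ones"
proof
  assume "pnorm x = 0"
  hence e: "mx x = mn x" unfolding pnorm_mx by simp
  show "x = mn x *\<^sub>R ones"
    unfolding vec_eq_iff
  proof
    fix i
    have "mn x \<le> x $ i" "x $ i \<le> mn x" using mn_le[of x i] mx_ge[of x i] e by simp_all
    thus "x $ i = (mn x *\<^sub>R ones) $ i" by simp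
  qed
next
  assume a: "x = mn x *\<^sub>R ones"
  obtain c where c: "x = c *\<^sub>R ones" using a by blast
  have "pnorm x = pnorm ((0::real^'n) + c *\<^sub>R ones)" using c by simp
  also have "\<dots> = 0" unfolding pnorm_shift by (rule pnorm_zero)
  finally show "pnorm x = 0" .
qed

lemma interior_Pball: "interior Pball = {x. pnorm x < 1}"
proof
  show "{x. pnorm x < 1} \<subseteq> interior Pball"
  proof
    fix x :: "real^'n" assume "x \<in> {x. pnorm x < 1}"
    hence x: "pnorm x < 1" by simp
    have "ball x (1 - pnorm x) \<subseteq> Pball"
    proof
      fix y assume "y \<in> ball x (1 - pnorm x)"
      hence "norm (y - x) < 1 - pnorm x" by (simp add: dist_norm norm_minus_commute)
      moreover have "pnorm y \<le> pnorm x + pnorm (y - x)" using pnorm_add[of x "y - x"] by simp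
      ultimately show "y \<in> Pball" unfolding Pball_def using pnorm_le_norm[of "y - x"] by simp
    qed
    thus "x \<in> interior Pball" using x by (meson centre_in_ball diff_gt_0_iff_gt interior_maximal open_ball subsetD interior_subset)
  qed
next
  show "interior Pball \<subseteq> {x. pnorm x < 1}"
  proof
    fix x :: "real^'n" assume "x \<in> interior Pball"
    then obtain e where e: "e > 0" "ball x e \<subseteq> Pball" by (meson mem_interior)
    have x1: "pnorm x \<le> 1" using e interior_subset \<open>x \<in> interior Pball\<close> unfolding Pball_def by auto
    show "x \<in> {x. pnorm x < 1}"
    proof (rule ccontr)
      assume "x \<notin> {x. pnorm x < 1}"
      hence p1: "pnorm x = 1" using x1 by simp
      obtain i where i: "x $ i = mx x" using mx_ex by metis
      obtain j where j: "x $ j = mn x" using mn_ex by metis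
      have ij: "i \<noteq> j" using p1 i j unfolding pnorm_mx by auto
      define h where "h = e/2"
      have h: "h > 0" "h < e" using e by (simp_all add: h_def)
      define y where "y = x + h *\<^sub>R axis i 1"
      have "dist x y < e" using h by (simp add: y_def dist_norm)
      hence "y \<in> Pball" using e by auto
      hence y2: "mx y - mn y \<le> 2" unfolding Pball_def pnorm_mx by simp
      have yi: "y $ i = mx x + h" by (simp add: y_def i axis_def)
      have yj: "y $ j = mn x" using ij by (simp add: y_def j axis_def)
      have a: "mx x + h \<le> mx y" using mx_ge[of y i] yi by simp
      have b: "mn y \<le> mn x" using mn_le[of y j] yj by simp
      have c: "mx x - mn x = 2" using p1 unfolding pnorm_mx by simp
      show False using a b c y2 h by linarith
    qed
  qed
qed

definition ftyp :: "real^'n \<Rightarrow> 'n set \<times> 'n set" where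
  "ftyp x = ({i. x $ i = mx x}, {i. x $ i = mn x})"

lemma typ_neg: "ftyp (- x) = prod.swap (ftyp x)"
  unfolding ftyp_def mx_neg mn_neg by auto

lemma pos_lower_bound:
  fixes A :: "real set"
  assumes "finite A" "\<And>a. a \<in> A \<Longrightarrow> 0 < a"
  obtains d where "0 < d" "\<And>a. a \<in> A \<Longrightarrow> d \<le> a"
proof -
  have "0 < Min (insert 1 A)" using assms by (subst Min_gr_iff) auto
  moreover have "\<And>a. a \<in> A \<Longrightarrow> Min (insert 1 A) \<le> a" using assms by auto
  ultimately show ?thesis using that by blast
qed

lemma key_eps:
  fixes x y :: "real^'n"
  assumes px: "pnorm x = 1" and py: "pnorm y = 1" and t: "ftyp x = ftyp y"
  shows "\<exists>e>0. pnorm ((1 + e) *\<^sub>R y - e *\<^sub>R x) \<le> 1"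
proof -
  let ?A = "(\<lambda>k. mx y - y $ k) ` {k. y $ k \<noteq> mx y} \<union> (\<lambda>k. y $ k - mn y) ` {k. y $ k \<noteq> mn y}"
  have fin: "finite ?A" by simp
  have pos: "\<And>a. a \<in> ?A \<Longrightarrow> 0 < a"
  proof -
    fix a assume "a \<in> ?A"
    then obtain k where "(a = mx y - y $ k \<and> y $ k \<noteq> mx y) \<or> (a = y $ k - mn y \<and> y $ k \<noteq> mn y)" by blast
    thus "0 < a" using mx_ge[of y k] mn_le[of y k] by auto
  qed
  obtain d where d: "0 < d" "\<And>a. a \<in> ?A \<Longrightarrow> d \<le> a" using pos_lower_bound[OF fin pos] by blast
  define e where "e = d / 2"
  have e0: "0 < e" using d by (simp add: e_def)
  have e2: "e * 2 = d" by (simp add: e_def)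
  have dx: "mx x - mn x = 2" using px unfolding pnorm_mx by simp
  have dy: "mx y - mn y = 2" using py unfolding pnorm_mx by simp
  define z where "z = (1 + e) *\<^sub>R y - e *\<^sub>R x"
  have zk: "z $ k = (1 + e) * y $ k - e * x $ k" for k by (simp add: z_def)
  have up: "z $ k \<le> (1 + e) * mx y - e * mx x" for k
  proof (cases "y $ k = mx y")
    case True
    hence "k \<in> fst (ftyp y)" by (simp add: ftyp_def)
    hence "k \<in> fst (ftyp x)" using t by simp
    hence "x $ k = mx x" by (simp add: ftyp_def)
    thus ?thesis using True zk by simp
  next
    case False
    hence "d \<le> mx y - y $ k" using d(2) by blast
    moreover have "mx x - x $ k \<le> 2" using mn_le[of x k] dx by simp
    hence "e * (mx x - x $ k) \<le> e * 2" using e0 by (intro mult_left_mono) auto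
    moreover have "0 \<le> e * (mx y - y $ k)" using e0 mx_ge[of y k] by simp
    ultimately have "e * (mx x - x $ k) \<le> (1 + e) * (mx y - y $ k)"
      using e2 by (simp add: distrib_right)
    hence "e * mx x - e * x $ k \<le> (1 + e) * mx y - (1 + e) * y $ k"
      by (simp add: right_diff_distrib)
    thus ?thesis using zk by simp
  qed
  have lo: "(1 + e) * mn y - e * mn x \<le> z $ k" for k
  proof (cases "y $ k = mn y")
    case True
    hence "k \<in> snd (ftyp y)" by (simp add: ftyp_def)
    hence "k \<in> snd (ftyp x)" using t by simp
    hence "x $ k = mn x" by (simp add: ftyp_def)
    thus ?thesis using True zk by simp
  next
    case False
    hence "d \<le> y $ k - mn y" using d(2) by blast
    moreover have "x $ k - mn x \<le> 2" using mx_ge[of x k] dx by simp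
    hence "e * (x $ k - mn x) \<le> e * 2" using e0 by (intro mult_left_mono) auto
    moreover have "0 \<le> e * (y $ k - mn y)" using e0 mn_le[of y k] by simp
    ultimately have "e * (x $ k - mn x) \<le> (1 + e) * (y $ k - mn y)"
      using e2 by (simp add: distrib_right)
    hence "e * x $ k - e * mn x \<le> (1 + e) * y $ k - (1 + e) * mn y"
      by (simp add: right_diff_distrib)
    thus ?thesis using zk by simp
  qed
  have "mx z \<le> (1 + e) * mx y - e * mx x" using up by (simp add: mx_le_iff)
  moreover have "(1 + e) * mn y - e * mn x \<le> mn z" using lo by (simp add: mn_ge_iff)
  ultimately have "mx z - mn z \<le> (1 + e) * (mx y - mn y) - e * (mx x - mn x)"
    by (simp add: right_diff_distrib)
  also have "\<dots> = 2" using dx dy by (simp add: algebra_simps)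
  finally have "pnorm z \<le> 1" unfolding pnorm_mx by simp
  thus ?thesis using e0 z_def by blast
qed

definition nonexp :: "(real^'n^'n) set \<Rightarrow> bool" where
  "nonexp S \<longleftrightarrow> (\<forall>A\<in>S. \<forall>x. pnorm (A *v x) \<le> pnorm x)"
definition fixones :: "(real^'n^'n) set \<Rightarrow> bool" where
  "fixones S \<longleftrightarrow> (\<forall>A\<in>S. A *v ones = ones)"

fun prodm :: "(nat \<Rightarrow> real^'n^'n) \<Rightarrow> nat \<Rightarrow> real^'n^'n" where
  "prodm \<tau> 0 = mat 1"
| "prodm \<tau> (Suc t) = \<tau> t ** prodm \<tau> t"

lemma traj_prodm: "traj \<tau> x t = prodm \<tau> t *v x"
  by (induct t) (simp_all add: matrix_vector_mul_assoc)

lemma traj_shift: "traj \<sigma> x (a + b) = traj (\<lambda>t. \<sigma> (t + a)) (traj \<sigma> x a) b"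
  by (induct b) (simp_all add: add.commute)

lemma traj_prefix: "(\<And>t. t < a \<Longrightarrow> \<sigma> t = \<sigma>' t) \<Longrightarrow> traj \<sigma> x a = traj \<sigma>' x a"
  by (induct a) simp_all

lemma traj_step_le:
  assumes "nonexp S" "\<forall>t. \<sigma> t \<in> S"
  shows "pnorm (traj \<sigma> x (Suc n)) \<le> pnorm (traj \<sigma> x n)"
  using assms unfolding nonexp_def by simp

lemma traj_mono:
  assumes "nonexp S" "\<forall>t. \<sigma> t \<in> S" "t \<le> t'"
  shows "pnorm (traj \<sigma> x t') \<le> pnorm (traj \<sigma> x t)"
  using assms(3)
proof (induct t' rule: dec_induct)
  case base then show ?case by simp
next
  case (step m)
  then show ?case using traj_step_le[OF assms(1,2), where x=x and n=m] by simp
qed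

lemma traj_lin: "traj \<sigma> (a *\<^sub>R x + b *\<^sub>R y) t = a *\<^sub>R traj \<sigma> x t + b *\<^sub>R traj \<sigma> y t"
  unfolding traj_prodm by (simp add: matrix_vector_right_distrib matrix_vector_mult_scaleR)

lemma traj_neg: "traj \<sigma> (- x) t = - traj \<sigma> x t"
proof -
  have "traj \<sigma> (- x) t = traj \<sigma> ((-1) *\<^sub>R x + 0 *\<^sub>R x) t" by simp
  also have "\<dots> = - traj \<sigma> x t" unfolding traj_lin by simp
  finally show ?thesis .
qed

lemma traj_ones: "fixones S \<Longrightarrow> (\<forall>t. \<sigma> t \<in> S) \<Longrightarrow> traj \<sigma> ones t = ones"
  by (induct t) (simp_all add: fixones_def)

lemma key_traj:
  fixes x y :: "real^'n"
  assumes ne: "nonexp S" and sig: "\<forall>t. \<sigma> t \<in> S"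
    and px: "pnorm x = 1" and py: "pnorm y = 1" and t: "ftyp x = ftyp y"
    and lt: "pnorm (traj \<sigma> x m) < 1"
  shows "pnorm (traj \<sigma> y m) < 1"
proof -
  obtain e where e: "e > 0" "pnorm ((1 + e) *\<^sub>R y - e *\<^sub>R x) \<le> 1"
    using key_eps[OF px py t] by blast
  define z where "z = (1 + e) *\<^sub>R y + (- e) *\<^sub>R x"
  have "pnorm (traj \<sigma> z m) \<le> pnorm (traj \<sigma> z 0)" by (rule traj_mono[OF ne sig]) simp
  also have "\<dots> \<le> 1" using e(2) by (simp add: z_def)
  finally have tz: "pnorm (traj \<sigma> z m) \<le> 1" .
  have "traj \<sigma> z m = (1 + e) *\<^sub>R traj \<sigma> y m + (- e) *\<^sub>R traj \<sigma> x m"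
    unfolding z_def by (rule traj_lin)
  hence "(1 + e) *\<^sub>R traj \<sigma> y m = traj \<sigma> z m + e *\<^sub>R traj \<sigma> x m" by simp
  hence "pnorm ((1 + e) *\<^sub>R traj \<sigma> y m) \<le> pnorm (traj \<sigma> z m) + pnorm (e *\<^sub>R traj \<sigma> x m)"
    by (simp add: pnorm_add)
  hence "(1 + e) * pnorm (traj \<sigma> y m) \<le> 1 + e * pnorm (traj \<sigma> x m)"
    using tz e(1) by (simp add: pnorm_scale)
  moreover have "e * pnorm (traj \<sigma> x m) < e * 1" using e(1) lt by (intro mult_strict_left_mono) auto
  ultimately have "(1 + e) * pnorm (traj \<sigma> y m) < (1 + e) * 1" by simp
  thus ?thesis using e(1) by (simp add: mult_less_cancel_left_pos)
qed

definition kappa :: "real^'n \<Rightarrow> ('n set \<times> 'n set) set" where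
  "kappa x = {ftyp x, prod.swap (ftyp x)}"

lemma key_traj2:
  fixes x y :: "real^'n"
  assumes ne: "nonexp S" and sig: "\<forall>t. \<sigma> t \<in> S"
    and px: "pnorm x = 1" and py: "pnorm y = 1" and k: "kappa x = kappa y"
    and lt: "pnorm (traj \<sigma> x m) < 1"
  shows "pnorm (traj \<sigma> y m) < 1"
proof -
  have "ftyp y \<in> kappa x" using k by (simp add: kappa_def)
  hence "ftyp x = ftyp y \<or> ftyp (- x) = ftyp y" by (auto simp: kappa_def typ_neg)
  thus ?thesis
  proof
    assume "ftyp x = ftyp y" thus ?thesis using key_traj[OF ne sig px py _ lt] by blast
  next
    assume a: "ftyp (- x) = ftyp y"
    have "pnorm (- x) = 1" by (subst pnorm_neg) (rule px)
    moreover have "pnorm (traj \<sigma> (- x) m) < 1" using lt by (simp add: traj_neg pnorm_neg)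
    ultimately show ?thesis using key_traj[OF ne sig _ py a] by blast
  qed
qed

definition Dall :: "('n::finite set \<times> 'n set) set" where
  "Dall = {p. fst p \<inter> snd p = {}}"
definition Dset :: "('n::finite set \<times> 'n set) set" where
  "Dset = {p. fst p \<noteq> {} \<and> snd p \<noteq> {} \<and> fst p \<inter> snd p = {}}"
definition Kset :: "('n::finite set \<times> 'n set) set set" where
  "Kset = (\<lambda>p. {p, prod.swap p}) ` Dset"

lemma card_Dall: "card (Dall :: ('n::finite set \<times> 'n set) set) = 3 ^ CARD('n)"
proof -
  let ?g = "\<lambda>p::('n set \<times> 'n set). (\<lambda>i. if i \<in> fst p then 1 else if i \<in> snd p then 2 else (0::nat))"
  let ?h = "\<lambda>f::'n \<Rightarrow> nat. ({i. f i = 1}, {i. f i = 2})"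
  let ?B = "Pi\<^sub>E (UNIV::'n set) (\<lambda>_. {..<3::nat})"
  have "bij_betw ?g Dall ?B"
  proof (rule bij_betw_byWitness[where f' = ?h])
    show "\<forall>a\<in>Dall. ?h (?g a) = a" by (auto simp: Dall_def)
    show "\<forall>a'\<in>?B. ?g (?h a') = a'"
    proof
      fix f assume "f \<in> ?B"
      hence f3: "\<And>i. f i < 3" by (auto simp: PiE_UNIV_domain)
      show "?g (?h f) = f"
      proof
        fix i
        have "f i = 0 \<or> f i = 1 \<or> f i = 2" using f3[of i] by auto
        thus "?g (?h f) i = f i" by auto
      qed
    qed
    show "?g ` Dall \<subseteq> ?B" by (auto simp: PiE_UNIV_domain)
    show "?h ` ?B \<subseteq> Dall" by (auto simp: Dall_def)
  qed
  hence "card (Dall :: ('n set \<times> 'n set) set) = card ?B" by (rule bij_betw_same_card)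
  also have "\<dots> = 3 ^ CARD('n)" by (simp add: card_PiE)
  finally show ?thesis .
qed

lemma card_Dset: "card (Dset :: ('n::finite set \<times> 'n set) set) + 2 ^ (CARD('n) + 1) = 3 ^ CARD('n) + 1"
proof -
  let ?D = "Dall :: ('n set \<times> 'n set) set"
  let ?E1 = "{p \<in> ?D. fst p = {}}"
  let ?E2 = "{p \<in> ?D. snd p = {}}"
  have e1: "?E1 = Pair {} ` UNIV" by (auto simp: Dall_def)
  have e2: "?E2 = (\<lambda>I. (I, {})) ` UNIV" by (auto simp: Dall_def)
  have "card ?E1 = card (UNIV :: 'n set set)" unfolding e1 by (rule card_image) (simp add: inj_on_def)
  also have "\<dots> = 2 ^ CARD('n)" using card_Pow[of "UNIV :: 'n set"] by simp
  finally have c1: "card ?E1 = 2 ^ CARD('n)" .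
  have "card ?E2 = card (UNIV :: 'n set set)" unfolding e2 by (rule card_image) (simp add: inj_on_def)
  also have "\<dots> = 2 ^ CARD('n)" using card_Pow[of "UNIV :: 'n set"] by simp
  finally have c2: "card ?E2 = 2 ^ CARD('n)" .
  have i12: "?E1 \<inter> ?E2 = {({}, {})}" by (auto simp: Dall_def)
  have u: "card ?E1 + card ?E2 = card (?E1 \<union> ?E2) + card (?E1 \<inter> ?E2)"
    by (rule card_Un_Int) simp_all
  have ds: "Dset = ?D - (?E1 \<union> ?E2)" by (auto simp: Dset_def Dall_def)
  have sub: "?E1 \<union> ?E2 \<subseteq> ?D" by auto
  have "card (?D - (?E1 \<union> ?E2)) = card ?D - card (?E1 \<union> ?E2)"
    using card_Diff_subset[OF _ sub] by simp
  moreover have "card (?E1 \<union> ?E2) \<le> card ?D" by (rule card_mono[OF _ sub]) simp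
  ultimately have "card ?D = card (?D - (?E1 \<union> ?E2)) + card (?E1 \<union> ?E2)"
    by simp
  hence "card ?D = card (Dset :: ('n set \<times> 'n set) set) + card (?E1 \<union> ?E2)"
    using ds by simp
  moreover have "card ?D = 3 ^ CARD('n)" by (rule card_Dall)
  ultimately show ?thesis using u c1 c2 i12 by simp
qed

lemma card_Kset: "card (Dset :: ('n::finite set \<times> 'n set) set) = 2 * card (Kset :: ('n set \<times> 'n set) set set)"
proof -
  have un: "\<Union>(Kset :: ('n set \<times> 'n set) set set) = Dset"
    by (auto simp: Kset_def Dset_def)
  have pw: "pairwise disjnt (Kset :: ('n set \<times> 'n set) set set)"
    unfolding pairwise_def disjnt_def Kset_def by (auto simp: prod.swap_def)
  have c2: "card A = 2" if A_in: "A \<in> (Kset :: ('n set \<times> 'n set) set set)" for A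
  proof -
    obtain p where p: "p \<in> Dset" "A = {p, prod.swap p}" using A_in unfolding Kset_def by blast
    have "p \<noteq> prod.swap p"
    proof
      assume "p = prod.swap p"
      hence "fst p = snd p" by (metis fst_swap)
      thus False using p(1) by (auto simp: Dset_def)
    qed
    thus ?thesis using p(2) by simp
  qed
  have "card (Dset :: ('n set \<times> 'n set) set) = card (\<Union>(Kset :: ('n set \<times> 'n set) set set))" using un by simp
  also have "\<dots> = sum card (Kset :: ('n set \<times> 'n set) set set)"
    by (rule card_Union_disjoint[OF pw]) (auto simp: Kset_def)
  also have "\<dots> = sum (\<lambda>_. 2) (Kset :: ('n set \<times> 'n set) set set)" using c2 by (rule sum.cong[OF refl])
  also have "\<dots> = 2 * card (Kset :: ('n set \<times> 'n set) set set)" by simp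
  finally show ?thesis .
qed

lemma card_Kset_Nbound: "card (Kset :: ('n::finite set \<times> 'n set) set set) = Nbound CARD('n)"
proof -
  have "3 ^ CARD('n) + 1 - 2 ^ (CARD('n) + 1) = card (Dset :: ('n set \<times> 'n set) set)"
    using card_Dset[where 'n='n] by simp
  thus ?thesis unfolding Nbound_def using card_Kset[where 'n='n] by simp
qed

lemma finite_Kset: "finite (Kset :: ('n::finite set \<times> 'n set) set set)"
  unfolding Kset_def by simp

lemma kappa_in_Kset:
  fixes x :: "real^'n"
  assumes "pnorm x = 1"
  shows "kappa x \<in> Kset"
proof -
  have d: "mx x - mn x = 2" using assms unfolding pnorm_mx by simp
  obtain i where i: "x $ i = mx x" using mx_ex by metis
  obtain j where j: "x $ j = mn x" using mn_ex by metis
  have "ftyp x \<in> Dset" unfolding Dset_def ftyp_def using i j d by auto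
  thus ?thesis unfolding kappa_def Kset_def by blast
qed

lemma lhs_rhs_one:
  fixes S :: "(real^'n^'n) set" and x0 :: "real^'n"
  assumes ne: "nonexp S" and sig: "\<forall>t. \<sigma> t \<in> S"
    and conv: "traj \<sigma> x0 \<longlonglongrightarrow> c *\<^sub>R ones"
    and x0: "pnorm x0 \<le> 1"
  shows "\<exists>\<sigma>'. (\<forall>t. \<sigma>' t \<in> S) \<and> pnorm (traj \<sigma>' x0 (Nbound CARD('n))) < 1"
proof -
  define P where "P k \<longleftrightarrow> (\<exists>\<sigma>'. (\<forall>t. \<sigma>' t \<in> S) \<and> pnorm (traj \<sigma>' x0 k) < 1)" for k
  obtain T where T: "\<forall>n\<ge>T. norm (traj \<sigma> x0 n - c *\<^sub>R ones) < 1"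
    using conv unfolding LIMSEQ_iff by (meson zero_less_one)
  have "pnorm (traj \<sigma> x0 T) = pnorm (traj \<sigma> x0 T + (- c) *\<^sub>R ones)" by (rule pnorm_shift[symmetric])
  also have "\<dots> \<le> norm (traj \<sigma> x0 T + (- c) *\<^sub>R ones)" by (rule pnorm_le_norm)
  also have "\<dots> < 1" using T by simp
  finally have "P T" unfolding P_def using sig by blast
  hence ex: "\<exists>k. P k" by blast
  define k where "k = (LEAST k. P k)"
  have Pk: "P k" unfolding k_def by (rule LeastI_ex[OF ex])
  have notP: "\<not> P i" if "i < k" for i using not_less_Least[of i P] that unfolding k_def by blast
  have kN: "k \<le> Nbound CARD('n)"
  proof (rule ccontr)
    assume "\<not> k \<le> Nbound CARD('n)"
    hence kN: "Nbound CARD('n) < k" by simp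
    obtain \<sigma>' where s': "\<forall>t. \<sigma>' t \<in> S" and lt: "pnorm (traj \<sigma>' x0 k) < 1" using Pk unfolding P_def by blast
    have one: "pnorm (traj \<sigma>' x0 i) = 1" if "i < k" for i
    proof -
      have "pnorm (traj \<sigma>' x0 i) \<le> pnorm (traj \<sigma>' x0 0)" by (rule traj_mono[OF ne s']) simp
      hence "pnorm (traj \<sigma>' x0 i) \<le> 1" using x0 by simp
      moreover have "\<not> pnorm (traj \<sigma>' x0 i) < 1" using notP[OF that] s' unfolding P_def by blast
      ultimately show ?thesis by simp
    qed
    let ?f = "\<lambda>i. kappa (traj \<sigma>' x0 i)"
    have "\<not> inj_on ?f {..<k}"
    proof
      assume inj: "inj_on ?f {..<k}"
      have "?f ` {..<k} \<subseteq> Kset" using one kappa_in_Kset by auto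
      hence "card {..<k} \<le> card (Kset :: ('n set \<times> 'n set) set set)"
        using card_inj_on_le[OF inj _ finite_Kset] by blast
      thus False using kN card_Kset_Nbound[where 'n='n] by simp
    qed
    then obtain i j where ij: "i < k" "j < k" "i \<noteq> j" "?f i = ?f j"
      unfolding inj_on_def by auto
    obtain a b where ab: "a < b" "b < k" "?f a = ?f b"
    proof (cases "i < j")
      case True thus ?thesis using ij that by blast
    next
      case False hence "j < i" using ij by simp
      thus ?thesis using ij that by metis
    qed
    obtain r where r: "k = b + r" using ab by (metis less_imp_add_positive)
    define \<tau> where "\<tau> t = (if t < a then \<sigma>' t else \<sigma>' (t + (b - a)))" for t
    have s'': "\<forall>t. \<tau> t \<in> S" using s' by (simp add: \<tau>_def)
    let ?g = "\<lambda>t. \<sigma>' (t + b)"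
    have sg: "\<forall>t. ?g t \<in> S" using s' by simp
    have tau_a: "traj \<tau> x0 a = traj \<sigma>' x0 a" by (rule traj_prefix) (simp add: \<tau>_def)
    have tau_shift: "(\<lambda>t. \<tau> (t + a)) = ?g" using ab by (auto simp: \<tau>_def)
    have "traj \<tau> x0 (a + r) = traj ?g (traj \<sigma>' x0 a) r"
      unfolding traj_shift tau_a tau_shift ..
    moreover have "traj \<sigma>' x0 k = traj ?g (traj \<sigma>' x0 b) r"
      unfolding r traj_shift ..
    ultimately have "pnorm (traj \<tau> x0 (a + r)) < 1"
      using key_traj2[OF ne sg one[of b] one[of a] _, where m=r] ab lt by simp
    hence "P (a + r)" unfolding P_def using s'' by blast
    moreover have "a + r < k" using ab r by simp
    ultimately show False using notP by blast
  qed
  obtain \<sigma>' where s': "\<forall>t. \<sigma>' t \<in> S" and lt: "pnorm (traj \<sigma>' x0 k) < 1" using Pk unfolding P_def by blast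
  have "pnorm (traj \<sigma>' x0 (Nbound CARD('n))) \<le> pnorm (traj \<sigma>' x0 k)" by (rule traj_mono[OF ne s' kN])
  hence "pnorm (traj \<sigma>' x0 (Nbound CARD('n))) < 1" using lt by (rule le_less_trans)
  thus ?thesis using s' by blast
qed

lemma finite_contract:
  fixes S :: "(real^'n^'n) set" and W :: "(real^'n) set"
  assumes ne: "nonexp S"
    and rhs: "\<And>x0. pnorm x0 \<le> 1 \<Longrightarrow> \<exists>\<sigma>. (\<forall>t. \<sigma> t \<in> S) \<and> pnorm (traj \<sigma> x0 N) < 1"
    and fin: "finite W" and W: "\<forall>w\<in>W. pnorm w \<le> 1"
  shows "\<exists>\<tau> m. (\<forall>t. \<tau> t \<in> S) \<and> (\<forall>w\<in>W. pnorm (traj \<tau> w m) < 1)"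
  using fin W
proof (induct W rule: finite_induct)
  case empty
  have "pnorm (0::real^'n) \<le> 1" by (simp add: pnorm_zero)
  then obtain \<sigma> where "\<forall>t. \<sigma> t \<in> S" using rhs by blast
  thus ?case by blast
next
  case (insert w W)
  then obtain \<tau> m where tau: "\<forall>t. \<tau> t \<in> S" and tw: "\<forall>v\<in>W. pnorm (traj \<tau> v m) < 1" by auto
  have "pnorm (traj \<tau> w m) \<le> pnorm (traj \<tau> w 0)" by (rule traj_mono[OF ne tau]) simp
  hence "pnorm (traj \<tau> w m) \<le> 1" using insert.prems by simp
  then obtain \<sigma> where sig: "\<forall>t. \<sigma> t \<in> S" and sw: "pnorm (traj \<sigma> (traj \<tau> w m) N) < 1"
    using rhs by blast
  define \<tau>' where "\<tau>' t = (if t < m then \<tau> t else \<sigma> (t - m))" for t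
  have tau': "\<forall>t. \<tau>' t \<in> S" using tau sig by (simp add: \<tau>'_def)
  have pre: "traj \<tau>' v m = traj \<tau> v m" for v by (rule traj_prefix) (simp add: \<tau>'_def)
  have sh: "(\<lambda>t. \<tau>' (t + m)) = \<sigma>" by (auto simp: \<tau>'_def)
  have eq: "traj \<tau>' v (m + N) = traj \<sigma> (traj \<tau> v m) N" for v
    unfolding traj_shift pre sh ..
  have "\<forall>v\<in>insert w W. pnorm (traj \<tau>' v (m + N)) < 1"
  proof
    fix v assume "v \<in> insert w W"
    thus "pnorm (traj \<tau>' v (m + N)) < 1"
    proof
      assume "v = w" thus ?thesis using sw eq by simp
    next
      assume v: "v \<in> W"
      have "pnorm (traj \<tau>' v (m + N)) \<le> pnorm (traj \<tau>' v m)" by (rule traj_mono[OF ne tau']) simp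
      thus ?thesis using tw v pre by (metis le_less_trans)
    qed
  qed
  thus ?case using tau' by blast
qed

lemma traj_zero: "traj \<tau> 0 m = 0"
  unfolding traj_prodm by simp

lemma traj_sum: "traj \<tau> (sum f A) m = sum (\<lambda>a. traj \<tau> (f a) m) A"
proof (cases "finite A")
  case True thus ?thesis
    by (induct A rule: finite_induct) (simp_all add: traj_zero traj_prodm matrix_vector_right_distrib)
next
  case False thus ?thesis by (simp add: traj_zero)
qed

lemma pnorm_sum: "pnorm (sum f A) \<le> sum (\<lambda>a. pnorm (f a)) A"
proof (cases "finite A")
  case True thus ?thesis
  proof (induct A rule: finite_induct)
    case empty thus ?case by (simp add: pnorm_zero)
  next
    case (insert a A)
    have "pnorm (sum f (insert a A)) = pnorm (f a + sum f A)" using insert by simp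
    also have "\<dots> \<le> pnorm (f a) + pnorm (sum f A)" by (rule pnorm_add)
    also have "\<dots> \<le> pnorm (f a) + sum (\<lambda>a. pnorm (f a)) A" using insert by simp
    finally show ?case using insert by simp
  qed
next
  case False thus ?thesis by (simp add: pnorm_zero)
qed

lemma traj_scale: "traj \<tau> (a *\<^sub>R x) m = a *\<^sub>R traj \<tau> x m"
  unfolding traj_prodm by (simp add: matrix_vector_mult_scaleR)

lemma pnorm_ones: "pnorm (c *\<^sub>R (ones :: real^'n)) = 0"
proof -
  have "pnorm (c *\<^sub>R (ones :: real^'n)) = pnorm ((0::real^'n) + c *\<^sub>R ones)" by simp
  also have "\<dots> = 0" unfolding pnorm_shift by (rule pnorm_zero)
  finally show ?thesis .
qed

lemma uniform_contract:
  fixes S :: "(real^'n^'n) set"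
  assumes ne: "nonexp S" and fo: "fixones S"
    and rhs: "\<And>x0. pnorm x0 \<le> 1 \<Longrightarrow> \<exists>\<sigma>. (\<forall>t. \<sigma> t \<in> S) \<and> pnorm (traj \<sigma> x0 N) < 1"
  shows "\<exists>\<tau> M \<rho>. (\<forall>t. \<tau> t \<in> S) \<and> 0 < M \<and> 0 \<le> \<rho> \<and> \<rho> < 1 \<and>
           (\<forall>x. pnorm (traj \<tau> x M) \<le> \<rho> * pnorm x)"
proof -
  obtain s :: "(real^'n) set" where fs: "finite s"
    and hull: "cbox (0 - (\<Sum>i\<in>Basis. 1 *\<^sub>R i)) (0 + (\<Sum>i\<in>Basis. 1 *\<^sub>R i)) = convex hull s"
    using cube_convex_hull[of 1 0] by auto
  have cube: "cbox (-1) (1::real^'n) = convex hull s" using hull by (simp add: Cart_1[symmetric])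
  have incube: "y \<in> convex hull s \<longleftrightarrow> (\<forall>i. -1 \<le> y $ i \<and> y $ i \<le> 1)" for y :: "real^'n"
    unfolding cube[symmetric] mem_box_cart by simp
  have sP: "\<forall>v\<in>s. pnorm v \<le> 1"
  proof
    fix v assume "v \<in> s"
    hence "v \<in> convex hull s" by (rule hull_inc)
    hence b: "\<And>i. -1 \<le> v $ i \<and> v $ i \<le> 1" using incube by blast
    have "mx v \<le> 1" unfolding mx_le_iff using b by blast
    moreover have "-1 \<le> mn v" unfolding mn_ge_iff using b by blast
    ultimately have "mx v - mn v \<le> 2" by simp
    thus "pnorm v \<le> 1" unfolding pnorm_mx by simp
  qed
  obtain \<tau> m where tau: "\<forall>t. \<tau> t \<in> S" and tm: "\<forall>v\<in>s. pnorm (traj \<tau> v m) < 1"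
    using finite_contract[OF ne rhs fs sP] by blast
  define M where "M = Suc m"
  have tM: "\<forall>v\<in>s. pnorm (traj \<tau> v M) < 1"
  proof
    fix v assume v: "v \<in> s"
    have "pnorm (traj \<tau> v M) \<le> pnorm (traj \<tau> v m)" by (rule traj_mono[OF ne tau]) (simp add: M_def)
    thus "pnorm (traj \<tau> v M) < 1" using tm v by (metis le_less_trans)
  qed
  have "0 \<in> convex hull s" unfolding incube by simp
  hence sne: "s \<noteq> {}" by auto
  define \<rho> where "\<rho> = Max ((\<lambda>v. pnorm (traj \<tau> v M)) ` s)"
  have rho_in: "\<rho> \<in> (\<lambda>v. pnorm (traj \<tau> v M)) ` s" unfolding \<rho>_def using fs sne by (intro Max_in) auto
  have rho1: "\<rho> < 1" using rho_in tM by auto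
  have rho0: "0 \<le> \<rho>" using rho_in pnorm_nonneg by auto
  have rho_ge: "pnorm (traj \<tau> v M) \<le> \<rho>" if "v \<in> s" for v
    unfolding \<rho>_def using fs that by (intro Max_ge) auto
  have main: "pnorm (traj \<tau> x M) \<le> \<rho> * pnorm x" for x
  proof -
    define r where "r = pnorm x"
    define c where "c = (mx x + mn x) / 2"
    have r0: "0 \<le> r" unfolding r_def by (rule pnorm_nonneg)
    show ?thesis
    proof (cases "r = 0")
      case True
      hence "x = mn x *\<^sub>R ones" unfolding r_def using pnorm_zero_iff by blast
      hence "traj \<tau> x M = mn x *\<^sub>R traj \<tau> ones M" using traj_scale by metis
      also have "\<dots> = mn x *\<^sub>R ones" using traj_ones[OF fo tau] by simp
      finally have "pnorm (traj \<tau> x M) = 0" using pnorm_ones by simp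
      thus ?thesis using True r_def by simp
    next
      case False
      hence rpos: "0 < r" using r0 by simp
      have cr1: "c + r = mx x" unfolding c_def r_def pnorm_mx by (simp add: field_simps)
      have cr2: "c - r = mn x" unfolding c_def r_def pnorm_mx by (simp add: field_simps)
      define y where "y = (1 / r) *\<^sub>R (x + (- c) *\<^sub>R ones)"
      have yi: "y $ i = (x $ i - c) / r" for i by (simp add: y_def divide_inverse mult.commute)
      have "\<forall>i. -1 \<le> y $ i \<and> y $ i \<le> 1"
      proof
        fix i
        have a: "x $ i - c \<le> r" using mx_ge[of x i] cr1 by simp
        have b: "- r \<le> x $ i - c" using mn_le[of x i] cr2 by simp
        have "(x $ i - c) / r \<le> 1" using a rpos by (simp add: pos_divide_le_eq)
        moreover have "-1 \<le> (x $ i - c) / r" using b rpos by (simp add: pos_le_divide_eq)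
        ultimately show "-1 \<le> y $ i \<and> y $ i \<le> 1" using yi by simp
      qed
      hence "y \<in> convex hull s" using incube by blast
      then obtain u where u0: "\<forall>v\<in>s. 0 \<le> u v" and u1: "sum u s = 1"
        and uy: "(\<Sum>v\<in>s. u v *\<^sub>R v) = y"
        unfolding convex_hull_finite[OF fs] by blast
      have "traj \<tau> y M = (\<Sum>v\<in>s. u v *\<^sub>R traj \<tau> v M)"
        unfolding uy[symmetric] traj_sum traj_scale ..
      hence "pnorm (traj \<tau> y M) \<le> (\<Sum>v\<in>s. pnorm (u v *\<^sub>R traj \<tau> v M))"
        using pnorm_sum by metis
      also have "\<dots> = (\<Sum>v\<in>s. u v * pnorm (traj \<tau> v M))"
        using u0 by (intro sum.cong) (simp_all add: pnorm_scale)
      also have "\<dots> \<le> (\<Sum>v\<in>s. u v * \<rho>)"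
        using u0 rho_ge by (intro sum_mono mult_left_mono) auto
      also have "\<dots> = \<rho>" using u1 by (simp add: sum_distrib_right[symmetric])
      finally have ty: "pnorm (traj \<tau> y M) \<le> \<rho>" .
      have "r *\<^sub>R y = x + (- c) *\<^sub>R ones" using rpos by (simp add: y_def)
      hence xe: "x = r *\<^sub>R y + c *\<^sub>R ones" by (simp add: algebra_simps)
      have "traj \<tau> x M = r *\<^sub>R traj \<tau> y M + c *\<^sub>R traj \<tau> ones M"
        unfolding xe by (rule traj_lin)
      hence "traj \<tau> x M = r *\<^sub>R traj \<tau> y M + c *\<^sub>R ones" using traj_ones[OF fo tau] by simp
      hence "pnorm (traj \<tau> x M) = pnorm (r *\<^sub>R traj \<tau> y M)"
        by (simp only: pnorm_shift)
      also have "\<dots> = r * pnorm (traj \<tau> y M)" using r0 by (simp add: pnorm_scale)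
      also have "\<dots> \<le> r * \<rho>" using ty r0 by (rule mult_left_mono)
      finally show ?thesis unfolding r_def by (simp add: mult.commute)
    qed
  qed
  show ?thesis using tau rho0 rho1 main by (intro exI[of _ \<tau>] exI[of _ M] exI[of _ \<rho>]) (simp add: M_def)
qed

lemma exK:
  fixes S :: "(real^'n^'n) set"
  assumes "finite S"
  shows "\<exists>K\<ge>0. \<forall>A\<in>S. \<forall>z. norm (A *v z) \<le> norm z * K"
proof -
  have "\<forall>A\<in>S. \<exists>KA>0. \<forall>z. norm (A *v z) \<le> norm z * KA"
  proof
    fix A :: "real^'n^'n"
    have "bounded_linear (\<lambda>z::real^'n. A *v z)"
      using matrix_vector_mul_linear linear_conv_bounded_linear by blast
    thus "\<exists>KA>0. \<forall>z. norm (A *v z) \<le> norm z * KA" by (rule bounded_linear.pos_bounded)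
  qed
  then obtain Kf where Kf: "\<forall>A\<in>S. Kf A > 0 \<and> (\<forall>z. norm (A *v z) \<le> norm z * Kf A)"
    by (metis (no_types, lifting) bchoice)
  define K where "K = sum Kf S"
  have K0: "0 \<le> K" unfolding K_def using Kf by (intro sum_nonneg) auto
  have "\<forall>A\<in>S. \<forall>z. norm (A *v z) \<le> norm z * K"
  proof (intro ballI allI)
    fix A and z :: "real^'n" assume A: "A \<in> S"
    have "Kf A \<le> K" unfolding K_def using Kf A assms by (intro member_le_sum) auto
    hence "norm z * Kf A \<le> norm z * K" by (rule mult_left_mono) simp
    thus "norm (A *v z) \<le> norm z * K" using Kf A by (meson order_trans)
  qed
  thus ?thesis using K0 by blast
qed

lemma diff_bound:
  fixes A :: "real^'n^'n"
  assumes fo: "A *v ones = ones" and K: "\<forall>z. norm (A *v z) \<le> norm z * K" and K0: "0 \<le> K"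
  shows "norm (A *v z - z) \<le> (K + 1) * (real CARD('n) * pnorm z)"
proof -
  define c where "c = (mx z + mn z) / 2"
  define w where "w = z + (- c) *\<^sub>R ones"
  have cr1: "c + pnorm z = mx z" unfolding c_def pnorm_mx by (simp add: field_simps)
  have cr2: "c - pnorm z = mn z" unfolding c_def pnorm_mx by (simp add: field_simps)
  have wi: "\<bar>w $ i\<bar> \<le> pnorm z" for i
  proof -
    have "w $ i = z $ i - c" by (simp add: w_def)
    moreover have "z $ i - c \<le> pnorm z" using mx_ge[of z i] cr1 by simp
    moreover have "- pnorm z \<le> z $ i - c" using mn_le[of z i] cr2 by simp
    ultimately show ?thesis by simp
  qed
  have "norm w \<le> (\<Sum>i\<in>UNIV. \<bar>w $ i\<bar>)" by (rule norm_le_l1_cart)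
  also have "\<dots> \<le> (\<Sum>i\<in>(UNIV::'n set). pnorm z)" using wi by (intro sum_mono) auto
  also have "\<dots> = real CARD('n) * pnorm z" by simp
  finally have nw: "norm w \<le> real CARD('n) * pnorm z" .
  have "A *v w = A *v z + (- c) *\<^sub>R ones" unfolding w_def
    by (simp add: matrix_vector_right_distrib matrix_vector_mult_diff_distrib matrix_vector_mult_scaleR fo)
  hence "A *v z - z = A *v w - w" by (simp add: w_def)
  hence "norm (A *v z - z) \<le> norm (A *v w) + norm w" by (simp add: norm_triangle_ineq4)
  also have "\<dots> \<le> norm w * K + norm w" using K by simp
  also have "\<dots> = (K + 1) * norm w" by (simp add: algebra_simps)
  also have "\<dots> \<le> (K + 1) * (real CARD('n) * pnorm z)" using nw K0 by (intro mult_left_mono) auto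
  finally show ?thesis .
qed

lemma contract_converge:
  fixes S :: "(real^'n^'n) set"
  assumes fin: "finite S" and ne: "nonexp S" and fo: "fixones S"
    and tau: "\<forall>t. \<tau> t \<in> S" and M0: "0 < M" and r0: "0 \<le> \<rho>0" and r1: "\<rho>0 < 1"
    and contr: "\<forall>x. pnorm (traj \<tau> x M) \<le> \<rho>0 * pnorm x"
  shows "\<exists>\<sigma>. (\<forall>t. \<sigma> t \<in> S) \<and> (\<forall>x0. \<exists>c::real. traj \<sigma> x0 \<longlonglongrightarrow> c *\<^sub>R ones)"
proof -
  define \<sigma> where "\<sigma> t = \<tau> (t mod M)" for t
  have sig: "\<forall>t. \<sigma> t \<in> S" using tau by (simp add: \<sigma>_def)
  have preM: "traj \<sigma> x M = traj \<tau> x M" for x by (rule traj_prefix) (simp add: \<sigma>_def)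
  have shM: "(\<lambda>t. \<sigma> (t + M)) = \<sigma>" by (rule ext) (simp add: \<sigma>_def)
  have blk: "pnorm (traj \<sigma> x (k * M + r)) \<le> \<rho>0 ^ k * pnorm x" for k r x
  proof (induct k arbitrary: x)
    case 0
    have "pnorm (traj \<sigma> x r) \<le> pnorm (traj \<sigma> x 0)" by (rule traj_mono[OF ne sig]) simp
    thus ?case by simp
  next
    case (Suc k)
    have "traj \<sigma> x (Suc k * M + r) = traj \<sigma> (traj \<sigma> x M) (k * M + r)"
      using traj_shift[of \<sigma> x M "k * M + r"] shM by (simp add: add.assoc)
    hence "pnorm (traj \<sigma> x (Suc k * M + r)) \<le> \<rho>0 ^ k * pnorm (traj \<sigma> x M)"
      using Suc by simp
    also have "\<dots> \<le> \<rho>0 ^ k * (\<rho>0 * pnorm x)"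
      using contr preM r0 by (intro mult_left_mono) auto
    also have "\<dots> = \<rho>0 ^ Suc k * pnorm x" by (simp add: mult_ac)
    finally show ?case .
  qed
  have tb: "pnorm (traj \<sigma> x t) \<le> \<rho>0 ^ (t div M) * pnorm x" for x t
    using blk[where k="t div M" and r="t mod M" and x=x] by simp
  define \<rho> where "\<rho> = (\<rho>0 + 1) / 2"
  have rp: "0 < \<rho>" "\<rho> < 1" "\<rho>0 \<le> \<rho>" using r0 r1 by (simp_all add: \<rho>_def)
  define q where "q = root M \<rho>"
  have q0: "0 < q" unfolding q_def using rp M0 by (simp add: real_root_gt_zero)
  have q1: "q < 1" unfolding q_def using rp M0 by simp
  have qM: "q ^ M = \<rho>" unfolding q_def using rp M0 by simp
  have pw: "\<rho>0 ^ (t div M) \<le> q ^ t / \<rho>" for t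
  proof -
    have "\<rho>0 ^ (t div M) \<le> \<rho> ^ (t div M)" using rp r0 by (intro power_mono) auto
    also have "\<dots> = q ^ (M * (t div M))" by (simp add: power_mult qM)
    finally have a: "\<rho>0 ^ (t div M) \<le> q ^ (M * (t div M))" .
    have "t = M * (t div M) + t mod M" by simp
    moreover have "t mod M < M" using M0 by simp
    ultimately have "t \<le> M * (t div M) + M" by linarith
    hence "q ^ (M * (t div M) + M) \<le> q ^ t" using q0 q1 by (intro power_decreasing) auto
    hence "q ^ (M * (t div M)) * \<rho> \<le> q ^ t" by (simp add: power_add qM)
    hence "q ^ (M * (t div M)) \<le> q ^ t / \<rho>" using rp by (simp add: pos_le_divide_eq)
    thus ?thesis using a by simp
  qed
  obtain K where K0: "0 \<le> K" and K: "\<forall>A\<in>S. \<forall>z. norm (A *v z) \<le> norm z * K"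
    using exK[OF fin] by blast
  show ?thesis
  proof (intro exI[of _ \<sigma>] conjI sig allI)
    fix x0 :: "real^'n"
    let ?x = "\<lambda>t. traj \<sigma> x0 t"
    define B where "B = pnorm x0 / \<rho>"
    have B0: "0 \<le> B" unfolding B_def by (rule divide_nonneg_pos[OF pnorm_nonneg rp(1)])
    have px: "pnorm (?x t) \<le> B * q ^ t" for t
    proof -
      have "pnorm (?x t) \<le> \<rho>0 ^ (t div M) * pnorm x0" by (rule tb)
      also have "\<dots> \<le> q ^ t / \<rho> * pnorm x0" using pw pnorm_nonneg by (intro mult_right_mono) auto
      also have "\<dots> = B * q ^ t" by (simp add: B_def)
      finally show ?thesis .
    qed
    define d where "d t = ?x (Suc t) - ?x t" for t
    define C where "C = (K + 1) * (real CARD('n) * B)"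
    have nd: "norm (d t) \<le> C * q ^ t" for t
    proof -
      have fA: "\<sigma> t *v ones = ones" using fo sig unfolding fixones_def by blast
      have KA: "\<forall>z. norm (\<sigma> t *v z) \<le> norm z * K" using K sig by blast
      have "norm (d t) \<le> (K + 1) * (real CARD('n) * pnorm (?x t))"
        unfolding d_def using diff_bound[OF fA KA K0] by simp
      also have "\<dots> \<le> (K + 1) * (real CARD('n) * (B * q ^ t))"
        using px K0 by (intro mult_left_mono) auto
      also have "\<dots> = C * q ^ t" by (simp add: C_def)
      finally show ?thesis .
    qed
    have "summable (\<lambda>t. C * q ^ t)" using q0 q1 by (intro summable_mult summable_geometric) simp
    hence sd: "summable d"
    proof (rule summable_comparison_test')
      fix n :: nat show "norm (d n) \<le> C * q ^ n" by (rule nd)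
    qed
    have tel: "?x n = x0 + (\<Sum>t<n. d t)" for n
    proof (induct n)
      case 0 show ?case by simp
    next
      case (Suc n)
      have "x0 + (\<Sum>t<Suc n. d t) = (x0 + (\<Sum>t<n. d t)) + d n" by simp
      also have "\<dots> = ?x n + d n" using Suc by simp
      also have "\<dots> = ?x (Suc n)" unfolding d_def by (subst add.commute) (rule diff_add_cancel)
      finally show ?case by simp
    qed
    define L where "L = x0 + suminf d"
    have conv: "?x \<longlonglongrightarrow> L"
      unfolding tel L_def by (intro tendsto_add tendsto_const summable_LIMSEQ sd)
    have g0: "(\<lambda>n. pnorm (?x n) + norm (L - ?x n)) \<longlonglongrightarrow> 0"
    proof (rule tendsto_add_zero)
      show "(\<lambda>n. pnorm (?x n)) \<longlonglongrightarrow> 0"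
      proof (rule Lim_null_comparison)
        show "\<forall>\<^sub>F n in sequentially. norm (pnorm (?x n)) \<le> B * q ^ n"
        proof (intro always_eventually allI)
          fix n
          have "norm (pnorm (?x n)) = pnorm (?x n)" by (simp add: abs_of_nonneg[OF pnorm_nonneg])
          thus "norm (pnorm (?x n)) \<le> B * q ^ n" using px[of n] by simp
        qed
        have "(\<lambda>n. B * q ^ n) \<longlonglongrightarrow> B * 0" using q0 q1 by (intro tendsto_mult tendsto_const LIMSEQ_power_zero) simp
        thus "(\<lambda>n. B * q ^ n) \<longlonglongrightarrow> 0" by simp
      qed
      have "(\<lambda>n. L - ?x n) \<longlonglongrightarrow> L - L" by (intro tendsto_diff tendsto_const conv)
      thus "(\<lambda>n. norm (L - ?x n)) \<longlonglongrightarrow> 0" using tendsto_norm_zero by force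
    qed
    have le: "pnorm L \<le> pnorm (?x n) + norm (L - ?x n)" for n
    proof -
      have "pnorm L = pnorm (?x n + (L - ?x n))" by simp
      also have "\<dots> \<le> pnorm (?x n) + pnorm (L - ?x n)" by (rule pnorm_add)
      also have "\<dots> \<le> pnorm (?x n) + norm (L - ?x n)" using pnorm_le_norm by simp
      finally show ?thesis .
    qed
    have "pnorm L \<le> 0" using LIMSEQ_le_const[OF g0] le by blast
    hence "pnorm L = 0" using pnorm_nonneg[of L] by simp
    hence "L = mn L *\<^sub>R ones" using pnorm_zero_iff by blast
    then obtain c where "L = c *\<^sub>R ones" by blast
    hence "traj \<sigma> x0 \<longlonglongrightarrow> c *\<^sub>R ones" using conv by simp
    thus "\<exists>c::real. traj \<sigma> x0 \<longlonglongrightarrow> c *\<^sub>R ones" by blast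
  qed
qed

theorem proposition1:
  fixes S :: "(real^'n^'n) set"
  assumes "CARD('n) \<ge> 2"
    and "finite S"
    and "\<And>A. A \<in> S \<Longrightarrow> A *v ones = ones"
    and "\<And>A x. A \<in> S \<Longrightarrow> pnorm (A *v x) \<le> pnorm x"
  shows "(\<exists>\<sigma>. (\<forall>t. \<sigma> t \<in> S) \<and>
            (\<forall>x0. \<exists>c::real. traj \<sigma> x0 \<longlonglongrightarrow> c *\<^sub>R ones))
         \<longleftrightarrow>
         (\<forall>x0 \<in> Pball. \<exists>\<sigma>. (\<forall>t. \<sigma> t \<in> S) \<and>
            traj \<sigma> x0 (Nbound CARD('n)) \<in> interior Pball)"
proof -
  have ne: "nonexp S" unfolding nonexp_def using assms(4) by blast
  have fo: "fixones S" unfolding fixones_def using assms(3) by blast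
  show ?thesis
  proof
    assume "\<exists>\<sigma>. (\<forall>t. \<sigma> t \<in> S) \<and> (\<forall>x0. \<exists>c::real. traj \<sigma> x0 \<longlonglongrightarrow> c *\<^sub>R ones)"
    then obtain \<sigma> where sig: "\<forall>t. \<sigma> t \<in> S" and cv: "\<forall>x0. \<exists>c::real. traj \<sigma> x0 \<longlonglongrightarrow> c *\<^sub>R ones"
      by blast
    show "\<forall>x0 \<in> Pball. \<exists>\<sigma>. (\<forall>t. \<sigma> t \<in> S) \<and> traj \<sigma> x0 (Nbound CARD('n)) \<in> interior Pball"
    proof
      fix x0 :: "real^'n" assume "x0 \<in> Pball"
      hence x0: "pnorm x0 \<le> 1" unfolding Pball_def by simp
      obtain c where c: "traj \<sigma> x0 \<longlonglongrightarrow> c *\<^sub>R ones" using cv by blast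
      obtain \<sigma>' where "\<forall>t. \<sigma>' t \<in> S" "pnorm (traj \<sigma>' x0 (Nbound CARD('n))) < 1"
        using lhs_rhs_one[OF ne sig c x0] by blast
      thus "\<exists>\<sigma>. (\<forall>t. \<sigma> t \<in> S) \<and> traj \<sigma> x0 (Nbound CARD('n)) \<in> interior Pball"
        unfolding interior_Pball by blast
    qed
  next
    assume r: "\<forall>x0 \<in> Pball. \<exists>\<sigma>. (\<forall>t. \<sigma> t \<in> S) \<and> traj \<sigma> x0 (Nbound CARD('n)) \<in> interior Pball"
    have rhs: "\<exists>\<sigma>. (\<forall>t. \<sigma> t \<in> S) \<and> pnorm (traj \<sigma> x0 (Nbound CARD('n))) < 1"
      if "pnorm x0 \<le> 1" for x0 :: "real^'n"
    proof -
      have "x0 \<in> Pball" using that unfolding Pball_def by simp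
      thus ?thesis using r unfolding interior_Pball by blast
    qed
    obtain \<tau> M \<rho> where "\<forall>t. \<tau> t \<in> S" "0 < M" "0 \<le> \<rho>" "\<rho> < 1"
      "\<forall>x. pnorm (traj \<tau> x M) \<le> \<rho> * pnorm x"
      using uniform_contract[OF ne fo rhs] by blast
    thus "\<exists>\<sigma>. (\<forall>t. \<sigma> t \<in> S) \<and> (\<forall>x0. \<exists>c::real. traj \<sigma> x0 \<longlonglongrightarrow> c *\<^sub>R ones)"
      using contract_converge[OF assms(2) ne fo] by blast
  qed
qed

end
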